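(* Let $h(z)=\sum_{j=0}^\infty h_jz^j$ be a fixed function analytic in the unit disc $D$ with $0<|h_j|\le M$ for all $j$. Let $f(z)=\sum_{j=0}^\infty f_jz^j$ be such that $F(z):=\sum_{j=0}^\infty\frac{f_j}{h_j}z^j$ is bounded and analytic in $D$. Then there exists an integer $n_1$ such that for every $n\ge n_1$, with $N=2n+1$, there exist pairwise distinct numbers $\lambda_1,\dots,\lambda_N$ with $|\lambda_k|=1$ such that \[|H_N(\lambda;z)-f(z)|\le|z|^n\frac{(5-|z|)^{n+1}}{4^{n-1}}\cdot\frac{2M}{3}\cdot\frac{3+|z|}{(1-|z|)^4},\qquad |z|<1,\] where $H_N(\lambda;z)=\sum_{k=1}^N\lambda_kh(\lambda_kz)$.
   Context: In the paper the threshold is written $n\ge n_1(-F)$, where $n_1(g)$ denotes an integer (depending on $g$) for which the following holds for all $n\ge n_1(g)$: writing $g=\sum(-a_j)z^j$, the roots of $P_n(g;z):=s_n(z)+z^{2n+1}\overline{s}_n(1/z)$ ($s_n$ the $n$-th Taylor polynomial of $\exp\int_0^z g$, $\overline{s}_n$ its coefficient-conjugate) are simple, lie on $|z|=1$, and their reciprocals $\lambda_k$ satisfy $\sum_k\lambda_k^{j+1}=a_j$ for $j<n$ and $|\sum_k\lambda_k^{j+1}-a_j|<r^{n+1}(r-\varepsilon)^{-j}/(2\varepsilon(1-r))$ for $j\ge n$, $0<\varepsilon<r<1$. *)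

theory Defs
  imports "HOL-Analysis.Analysis"
begin

definition pser :: "(nat \<Rightarrow> complex) \<Rightarrow> complex \<Rightarrow> complex" where
  "pser c z = (\<Sum>j. c j * z ^ j)"

definition HN :: "(nat \<Rightarrow> complex) \<Rightarrow> nat \<Rightarrow> (nat \<Rightarrow> complex) \<Rightarrow> complex \<Rightarrow> complex" where
  "HN hc N lam z = (\<Sum>k=1..N. lam k * pser hc (lam k * z))"

end

theory Submission
  imports Defs "HOL-Complex_Analysis.Complex_Analysis"
begin

lemma rou_sum:
  fixes K j l :: nat assumes "j < K" "l < K"
  shows "(\<Sum>t<K. (exp (2 * of_real pi * \<i> / of_nat K)^j * cnj (exp (2 * of_real pi * \<i> / of_nat K))^l)^t)
         = (if j = l then of_nat K else 0)"
proof -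
  define x where "x = 2 * of_real pi * \<i> / (of_nat K :: complex)"
  have K: "K > 0" using assms by auto
  have e: "exp x ^ j * cnj (exp x) ^ l = exp ((of_int (int j - int l)) * x)"
  proof -
    have "cnj (exp x) = exp (- x)" unfolding x_def by (simp add: exp_cnj)
    hence "exp x ^ j * cnj (exp x) ^ l = exp (of_nat j * x) * exp (of_nat l * (-x))"
      by (simp only: exp_of_nat_mult)
    also have "\<dots> = exp (of_nat j * x + of_nat l * (-x))" by (simp only: exp_add)
    also have "of_nat j * x + of_nat l * (-x) = (of_int (int j - int l)) * x" by (simp add: algebra_simps)
    finally show ?thesis .
  qed
  show ?thesis
  proof (cases "j = l")
    case True
    then show ?thesis unfolding x_def[symmetric] e by simp
  next
    case False
    define d where "d = int j - int l"
    have d0: "d \<noteq> 0" and dK: "\<bar>d\<bar> < int K" using False assms unfolding d_def by auto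
    define z where "z = exp (of_int d * x)"
    have zK: "z ^ K = 1"
    proof -
      have "z ^ K = exp (of_nat K * (of_int d * x))" unfolding z_def by (simp add: exp_of_nat_mult)
      also have "of_nat K * (of_int d * x) = of_int d * (2 * of_real pi * \<i>)"
        using K unfolding x_def by (simp add: field_simps)
      also have "exp \<dots> = 1" using exp_plus_2pin[of 0 d] by (simp add: algebra_simps)
      finally show ?thesis .
    qed
    have z1: "z \<noteq> 1"
    proof
      assume "z = 1"
      then obtain m :: int where m: "Im (of_int d * x) = of_int (2 * m) * pi"
        unfolding z_def exp_eq_1 by blast
      have "Im (of_int d * x) = 2 * pi * real_of_int d / real K" unfolding x_def by simp
      with m have "real_of_int d = real_of_int m * real K" using K by (simp add: field_simps)
      hence "d = m * int K" by (metis of_int_eq_iff of_int_mult of_int_of_nat_eq)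
      with d0 dK show False
        by (metis abs_mult abs_of_nat mult_le_cancel_right1 not_less of_nat_0_less_iff K abs_ge_zero
             mult_eq_0_iff not_less_iff_gr_or_eq zero_less_abs_iff int_one_le_iff_zero_less abs_zmult_eq_1)
    qed
    have "(\<Sum>t<K. z ^ t) = 0" using zK z1 by (simp add: sum_gp_strict)
    then show ?thesis using False unfolding x_def[symmetric] e d_def[symmetric] z_def[symmetric] by simp
  qed
qed

lemma discrete_parseval:
  fixes c :: "nat \<Rightarrow> complex" and K :: nat assumes K: "K > 0"
  shows "(\<Sum>t<K. (cmod (\<Sum>j<K. c j * (exp (2 * of_real pi * \<i> / of_nat K)^t)^j))^2)
          = real K * (\<Sum>j<K. (cmod (c j))^2)"
proof -
  define w where "w = exp (2 * of_real pi * \<i> / (of_nat K :: complex))"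
  have "complex_of_real (\<Sum>t<K. (cmod (\<Sum>j<K. c j * (w^t)^j))^2)
     = (\<Sum>t<K. (\<Sum>j<K. c j * (w^t)^j) * cnj (\<Sum>j<K. c j * (w^t)^j))"
    by (simp only: of_real_sum complex_norm_square)
  also have "\<dots> = (\<Sum>t<K. \<Sum>j<K. \<Sum>l<K. (c j * cnj (c l)) * (w^j * cnj w ^ l)^t)"
    by (intro sum.cong refl)
       (simp add: cnj_sum sum_product power_mult_distrib power_mult[symmetric] mult.commute mult.left_commute,
        intro sum.cong refl, simp only: mult_ac)
  also have "\<dots> = (\<Sum>j<K. \<Sum>t<K. \<Sum>l<K. (c j * cnj (c l)) * (w^j * cnj w ^ l)^t)"
    by (rule sum.swap)
  also have "\<dots> = (\<Sum>j<K. \<Sum>l<K. \<Sum>t<K. (c j * cnj (c l)) * (w^j * cnj w ^ l)^t)"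
    by (rule sum.cong[OF refl], rule sum.swap)
  also have "\<dots> = (\<Sum>j<K. \<Sum>l<K. (c j * cnj (c l)) * (\<Sum>t<K. (w^j * cnj w ^ l)^t))"
    by (simp only: sum_distrib_left)
  also have "\<dots> = (\<Sum>j<K. \<Sum>l<K. (c j * cnj (c l)) * (if j = l then of_nat K else 0))"
    by (intro sum.cong refl) (simp add: w_def rou_sum)
  also have "\<dots> = (\<Sum>j<K. (c j * cnj (c j)) * of_nat K)"
    by (simp add: if_distrib cong: if_cong)
  also have "\<dots> = complex_of_real (real K * (\<Sum>j<K. (cmod (c j))^2))"
    by (simp add: complex_norm_square[symmetric] sum_distrib_left mult.commute)
  finally show ?thesis unfolding w_def using of_real_eq_iff by blast
qed

lemma parseval_bound_r:
  fixes d :: "nat \<Rightarrow> complex" and D :: "complex \<Rightarrow> complex"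
  assumes sums: "\<And>w. norm w < 1 \<Longrightarrow> (\<lambda>j. d j * w^j) sums D w"
    and bd: "\<And>w. norm w < 1 \<Longrightarrow> norm (D w) \<le> C"
    and r: "0 \<le> r" "r < 1"
  shows "(\<Sum>j<J. (norm (d j))^2 * r^(2*j)) \<le> C^2"
proof -
  have "norm (D 0) \<le> C" using bd[of 0] by simp
  hence C0: "0 \<le> C" by (meson norm_ge_zero order_trans)
  define a where "a j = norm (d j) * r^j" for j
  have n1: "norm (complex_of_real ((1+r)/2)) < 1" by (simp only: norm_of_real) (use r in auto)
  have n2: "norm (complex_of_real r) < norm (complex_of_real ((1+r)/2))"
    by (simp only: norm_of_real) (use r in auto)
  have "summable (\<lambda>j. norm (d j * (complex_of_real r)^j))"
    by (rule powser_insidea[OF sums_summable[OF sums[OF n1]] n2])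
  hence suma: "summable a" unfolding a_def by (simp add: norm_mult norm_power abs_of_nonneg r)
  define tau where "tau K = suminf a - (\<Sum>j<K. a j)" for K
  have tau0: "tau \<longlonglongrightarrow> 0"
    using tendsto_diff[OF tendsto_const[of "suminf a"] summable_LIMSEQ[OF suma]] unfolding tau_def by simp
  have tau_eq: "tau K = (\<Sum>i. a (i + K))" for K
    using suminf_split_initial_segment[OF suma, of K] unfolding tau_def by simp
  have main: "(\<Sum>j<J. (norm (d j))^2 * r^(2*j)) \<le> (C + tau K)^2" if K: "K \<ge> J" "K > 0" for K
  proof -
    define w where "w = exp (2 * of_real pi * \<i> / (of_nat K :: complex))"
    have nw: "norm w = 1" unfolding w_def by (simp add: norm_exp_eq_Re)
    define P where "P t = (\<Sum>j<K. (d j * of_real r ^ j) * (w^t)^j)" for t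
    have Pt: "norm (P t) \<le> C + tau K" for t
    proof -
      define z where "z = of_real r * w^t"
      have nz: "norm z = r" unfolding z_def using r by (simp add: norm_mult norm_power nw)
      have s1: "(\<lambda>j. d j * z^j) sums D z" using sums nz r by simp
      have Pz: "P t = (\<Sum>j<K. d j * z^j)" unfolding P_def z_def by (simp add: power_mult_distrib mult_ac)
      have s2: "(\<lambda>i. d (i+K) * z^(i+K)) sums (D z - P t)"
        using sums_split_initial_segment[OF s1, of K] Pz by simp
      have na: "norm (d (i+K) * z^(i+K)) = a (i + K)" for i
        unfolding a_def by (simp add: norm_mult norm_power nz)
      have sa: "summable (\<lambda>i. a (i+K))" using suma by (simp add: summable_iff_shift)
      have "norm (D z - P t) \<le> (\<Sum>i. norm (d (i+K) * z^(i+K)))"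
        using summable_norm[of "\<lambda>i. d (i+K) * z^(i+K)"] s2 sa na by (simp add: sums_iff)
      also have "\<dots> = tau K" using tau_eq na by simp
      finally have "norm (D z - P t) \<le> tau K" .
      moreover have "norm (D z) \<le> C" using bd nz r by simp
      ultimately show ?thesis using norm_triangle_ineq4[of "D z" "D z - P t"] by simp
    qed
    have sK: "summable (\<lambda>i. a (i+K))" using suma by (simp add: summable_iff_shift)
    have tK: "0 \<le> tau K" unfolding tau_eq using sK r
      by (intro suminf_nonneg) (auto simp: a_def)
    have "(\<Sum>j<J. (norm (d j))^2 * r^(2*j)) \<le> (\<Sum>j<K. (norm (d j))^2 * r^(2*j))"
      using K by (intro sum_mono2) auto
    also have "\<dots> = (\<Sum>j<K. (cmod (d j * of_real r ^ j))^2)"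
      using r by (simp add: norm_mult norm_power power_mult_distrib power_mult abs_of_nonneg mult_ac)
    also have "\<dots> = (\<Sum>t<K. (norm (P t))^2) / real K"
      unfolding P_def w_def using discrete_parseval[OF K(2), of "\<lambda>j. d j * of_real r ^ j"] K by simp
    also have "\<dots> \<le> (\<Sum>t<K. (C + tau K)^2) / real K"
      by (intro divide_right_mono sum_mono power_mono Pt) auto
    also have "\<dots> = (C + tau K)^2" using K by simp
    finally show ?thesis .
  qed
  have "(\<lambda>K. (C + tau K)^2) \<longlonglongrightarrow> (C + 0)^2"
    by (intro tendsto_intros tau0)
  moreover have "eventually (\<lambda>K. (\<Sum>j<J. (norm (d j))^2 * r^(2*j)) \<le> (C + tau K)^2) sequentially"
    using eventually_ge_at_top[of "Suc J"] by eventually_elim (rule main, auto)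
  ultimately show ?thesis
    by (intro tendsto_le[OF trivial_limit_sequentially _ tendsto_const]) auto
qed

lemma parseval_bound:
  fixes d :: "nat \<Rightarrow> complex" and D :: "complex \<Rightarrow> complex"
  assumes sums: "\<And>w. norm w < 1 \<Longrightarrow> (\<lambda>j. d j * w^j) sums D w"
    and bd: "\<And>w. norm w < 1 \<Longrightarrow> norm (D w) \<le> C"
  shows "(\<Sum>j<J. (norm (d j))^2) \<le> C^2"
proof -
  have "((\<lambda>r. \<Sum>j<J. (norm (d j))^2 * r^(2*j)) \<longlongrightarrow> (\<Sum>j<J. (norm (d j))^2 * 1^(2*j))) (at_left (1::real))"
    by (intro tendsto_intros)
  moreover have "eventually (\<lambda>r. (\<Sum>j<J. (norm (d j))^2 * r^(2*j)) \<le> C^2) (at_left (1::real))"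
    using eventually_at_left_real[of 0 "1::real", OF zero_less_one]
    by eventually_elim (rule parseval_bound_r[OF sums bd], auto)
  ultimately show ?thesis
    by (intro tendsto_le[OF trivial_limit_at_left_real tendsto_const]) auto
qed

lemma amgm_coef:
  fixes g :: real and j :: nat assumes "0 \<le> g"
  shows "g \<le> ((real (Suc j) * g)^2 + inverse (real (Suc j) ^ 2)) / 2"
proof -
  define u where "u = real (Suc j) * g"
  define v where "v = inverse (real (Suc j))"
  have eq: "u * v = g" unfolding u_def v_def by (simp add: field_simps)
  have "u * v \<le> (u^2 + v^2)/2" using sum_squares_ge_zero[of "u - v" 0]
    by (simp add: power2_eq_square algebra_simps)
  hence "g \<le> (u^2 + v^2)/2" using eq by simp
  thus ?thesis unfolding u_def v_def by (simp add: power_inverse)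
qed

lemma analytic_setup:
  fixes F :: "complex \<Rightarrow> complex" and B :: real
  assumes holF: "F holomorphic_on ball 0 1" and bdF: "\<And>w. norm w < 1 \<Longrightarrow> norm (F w) \<le> B"
  obtains Gf :: "complex fps" and G :: "complex \<Rightarrow> complex" where
    "Gf $ 0 = 1" "fps_deriv Gf = - (fps_expansion F 0 * Gf)"
    "summable (\<lambda>k. norm (Gf $ k))"
    "\<And>w. norm w < 1 \<Longrightarrow> (\<lambda>k. Gf $ k * w^k) sums G w"
    "\<And>w. norm w < 1 \<Longrightarrow> exp (-B) \<le> norm (G w)"
proof -
  have "norm (F 0) \<le> B" using bdF[of 0] by simp
  hence B0: "0 \<le> B" by (meson norm_ge_zero order_trans)
  obtain I0 where I0: "\<And>x. x \<in> ball 0 1 \<Longrightarrow> (I0 has_field_derivative F x) (at x within ball 0 1)"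
    using holomorphic_convex_primitive'[OF convex_ball open_ball holF] by blast
  define I where "I = (\<lambda>w. I0 w - I0 0)"
  have I: "(I has_field_derivative F x) (at x)" if "x \<in> ball 0 1" for x
  proof -
    have d0: "(I0 has_field_derivative F x) (at x)" using I0[OF that] at_within_open[OF that open_ball] by simp
    have "((\<lambda>w. I0 w - I0 0) has_field_derivative F x - 0) (at x)" by (rule DERIV_diff[OF d0 DERIV_const])
    thus ?thesis unfolding I_def by simp
  qed
  have Ib: "norm (I w) \<le> B" if "norm w < 1" for w
  proof -
    have "norm (I w - I 0) \<le> B * norm (w - 0)"
      by (rule field_differentiable_bound[OF convex_ball[of 0 1], where f=I and f'=F])
         (use I bdF that in \<open>auto simp: has_field_derivative_at_within\<close>)
    also have "\<dots> \<le> B" using that B0 by (simp add: mult_left_le)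
    finally show ?thesis by (simp add: I_def)
  qed
  define G where "G w = exp (- I w)" for w
  have G': "(G has_field_derivative (- (F x * G x))) (at x)" if "x \<in> ball 0 1" for x
    unfolding G_def using I[OF that] by (auto intro!: derivative_eq_intros)
  have holG: "G holomorphic_on ball 0 1"
    using G' holomorphic_on_open by blast
  have dG: "deriv G x = - (F x * G x)" if "x \<in> ball 0 1" for x
    using G'[OF that] DERIV_imp_deriv by blast
  have Gup: "norm (G w) \<le> exp B" if "norm w < 1" for w
    unfolding G_def norm_exp_eq_Re using Ib[OF that] abs_Re_le_cmod[of "I w"] by simp
  have Glo: "exp (-B) \<le> norm (G w)" if "norm w < 1" for w
    unfolding G_def norm_exp_eq_Re using Ib[OF that] abs_Re_le_cmod[of "I w"] by simp
  define Gf where "Gf = fps_expansion G 0"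
  have eG: "G has_fps_expansion Gf" unfolding Gf_def
    by (rule has_fps_expansion_fps_expansion[OF open_ball _ holG]) simp
  have eF: "F has_fps_expansion fps_expansion F 0"
    by (rule has_fps_expansion_fps_expansion[OF open_ball _ holF]) simp
  have e1: "deriv G has_fps_expansion fps_deriv Gf" by (rule has_fps_expansion_deriv[OF eG])
  have e2: "(\<lambda>x. - (F x * G x)) has_fps_expansion - (fps_expansion F 0 * Gf)"
    by (intro has_fps_expansion_minus has_fps_expansion_mult eF eG)
  have ev: "eventually (\<lambda>x. deriv G x = - (F x * G x)) (nhds 0)"
  proof -
    have "eventually (\<lambda>x. x \<in> ball 0 1) (nhds (0::complex))" by (rule eventually_nhds_in_open) auto
    thus ?thesis by eventually_elim (use dG in auto)
  qed
  have e3: "deriv G has_fps_expansion - (fps_expansion F 0 * Gf)"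
    using has_fps_expansion_cong[OF ev refl] e2 by simp
  have deq: "fps_deriv Gf = - (fps_expansion F 0 * Gf)"
    by (rule fps_expansion_unique_complex[OF e1 e3])
  have G0: "Gf $ 0 = 1" using fps_nth_fps_expansion[OF eG, of 0] by (simp add: G_def I_def)
  have holG_e: "G holomorphic_on eball 0 1" using holG by (simp add: one_ereal_def)
  have sG: "(\<lambda>k. Gf $ k * w^k) sums G w" if "norm w < 1" for w
    by (rule has_fps_expansion_imp_sums_complex[OF eG holG_e]) (use that in \<open>simp add: one_ereal_def\<close>)
  have holdG: "deriv G holomorphic_on eball 0 1"
    using holomorphic_deriv[OF holG open_ball] by (simp add: one_ereal_def)
  have sdG: "(\<lambda>k. fps_deriv Gf $ k * w^k) sums deriv G w" if "norm w < 1" for w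
    by (rule has_fps_expansion_imp_sums_complex[OF e1 holdG]) (use that in \<open>simp add: one_ereal_def\<close>)
  have bdG: "norm (deriv G w) \<le> B * exp B" if "norm w < 1" for w
  proof -
    have "norm (deriv G w) = norm (F w) * norm (G w)" using dG[of w] that by (simp add: norm_mult)
    also have "\<dots> \<le> B * exp B" using bdF[OF that] Gup[OF that] B0
      by (intro mult_mono) auto
    finally show ?thesis .
  qed
  have pars: "(\<Sum>j<J. (norm (fps_deriv Gf $ j))^2) \<le> (B * exp B)^2" for J
    by (rule parseval_bound[OF sdG bdG])
  define x where "x j = (real (Suc j) * norm (Gf $ Suc j))^2" for j
  have xeq: "(norm (fps_deriv Gf $ j))^2 = x j" for j
    unfolding x_def fps_deriv_nth norm_mult norm_of_nat by simp
  have sx: "summable x"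
    by (rule summableI_nonneg_bounded[of _ "(B * exp B)^2"]) (use pars xeq in \<open>auto simp: x_def\<close>)
  have si: "summable (\<lambda>j. inverse (real (Suc j) ^ 2))"
    using inverse_power_summable[of 2, where 'a=real] summable_Suc_iff[of "\<lambda>n. inverse (real n ^ 2)"]
    by simp
  have "summable (\<lambda>j. norm (Gf $ Suc j))"
  proof (rule summable_comparison_test'[OF summable_divide[OF summable_add[OF sx si], of 2]])
    fix j :: nat
    show "norm (norm (Gf $ Suc j)) \<le> (x j + inverse (real (Suc j) ^ 2)) / 2"
      unfolding x_def real_norm_def abs_norm_cancel by (rule amgm_coef) simp
  qed
  hence sN: "summable (\<lambda>k. norm (Gf $ k))" using summable_Suc_iff by blast
  show ?thesis by (rule that[OF G0 deq sN sG Glo])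
qed

lemma poly_eq_from_roots:
  fixes Q :: "complex poly" and w :: "nat \<Rightarrow> complex" and S :: "nat set"
  assumes S: "finite S" "inj_on w S" "card S = N"
    and roots: "\<And>k. k \<in> S \<Longrightarrow> poly Q (w k) = 0"
    and dQ: "degree Q \<le> N" and cQ: "coeff Q N = u"
  shows "Q = smult u (\<Prod>k\<in>S. [:- w k, 1:])"
proof (rule ccontr)
  define P where "P = (\<Prod>k\<in>S. [:- w k, 1:])"
  have dP: "degree P = N" unfolding P_def using S
    by (subst degree_prod_sum_eq) auto
  have lP: "coeff P N = 1" using lead_coeff_prod[of "\<lambda>k. [:- w k, 1:]" S] dP unfolding P_def by simp
  define D where "D = Q - smult u P"
  assume "Q \<noteq> smult u (\<Prod>k\<in>S. [:- w k, 1:])"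
  hence D0: "D \<noteq> 0" unfolding D_def P_def by simp
  have dD: "degree D \<le> N" unfolding D_def using dQ dP
    by (meson degree_diff_le degree_smult_le order_trans)
  have cD: "coeff D N = 0" unfolding D_def using cQ lP by simp
  have dD2: "degree D < N"
  proof -
    have "degree D \<noteq> N" using cD D0 by (metis leading_coeff_0_iff)
    thus ?thesis using dD by simp
  qed
  have rD: "w ` S \<subseteq> {x. poly D x = 0}"
  proof
    fix x assume "x \<in> w ` S"
    then obtain k where k: "k \<in> S" "x = w k" by auto
    have "poly P (w k) = 0" unfolding P_def using k S(1)
      by (auto simp: poly_prod intro!: prod_zero bexI[of _ k])
    thus "x \<in> {x. poly D x = 0}" using roots[OF k(1)] k unfolding D_def by simp
  qed
  have "N = card (w ` S)" using S by (simp add: card_image)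
  also have "\<dots> \<le> card {x. poly D x = 0}" by (rule card_mono[OF poly_roots_finite[OF D0] rD])
  also have "\<dots> \<le> degree D" by (rule card_poly_roots_bound[OF D0])
  finally show False using dD2 by simp
qed

lemma geom_fps_mult:
  fixes c :: complex
  shows "Abs_fps (\<lambda>m. c ^ (m+1)) * (1 - fps_const c * fps_X) = fps_const c"
proof -
  have "Abs_fps (\<lambda>m. c ^ (m+1)) * (1 - fps_const c * fps_X)
        = Abs_fps (\<lambda>m. c ^ (m+1)) - fps_const c * (Abs_fps (\<lambda>m. c ^ (m+1)) * fps_X)"
    by (simp add: algebra_simps)
  also have "\<dots> = fps_const c"
    by (simp add: fps_eq_iff) (metis Suc_pred power_Suc)
  finally show ?thesis .
qed

lemma newton_fps:
  fixes c :: "nat \<Rightarrow> complex" and S :: "nat set" assumes "finite S"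
  shows "fps_deriv (\<Prod>k\<in>S. (1 - fps_const (c k) * fps_X))
       = - ((\<Sum>k\<in>S. Abs_fps (\<lambda>m. c k ^ (m+1))) * (\<Prod>k\<in>S. (1 - fps_const (c k) * fps_X)))"
  using assms
proof (induction S rule: finite_induct)
  case empty
  then show ?case by simp
next
  case (insert x S)
  define Q where "Q = (\<Prod>k\<in>S. (1 - fps_const (c k) * fps_X))"
  define P where "P = (\<Sum>k\<in>S. Abs_fps (\<lambda>m. c k ^ (m+1)))"
  define R where "R = Abs_fps (\<lambda>m. c x ^ (m+1))"
  have IH: "fps_deriv Q = - (P * Q)" using insert.IH unfolding Q_def P_def .
  have RR: "R * (1 - fps_const (c x) * fps_X) = fps_const (c x)" unfolding R_def by (rule geom_fps_mult)
  have "fps_deriv ((1 - fps_const (c x) * fps_X) * Q)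
      = - (fps_const (c x) * Q) + (1 - fps_const (c x) * fps_X) * fps_deriv Q"
  proof -
    have d1: "fps_deriv (1 - fps_const (c x) * fps_X) = - fps_const (c x)" by simp
    show ?thesis by (simp only: fps_deriv_mult d1 mult_minus_left add.commute)
  qed
  also have "\<dots> = - ((R + P) * ((1 - fps_const (c x) * fps_X) * Q))"
  proof -
    have aux: "- a + b * (- (p * q)) = - ((r + p) * (b * q))" if "a = r * (b * q)"
      for a b p q r :: "complex fps" using that by (simp add: algebra_simps)
    show ?thesis unfolding IH
      by (rule aux) (simp only: mult.assoc[symmetric] RR)
  qed
  finally have fin: "fps_deriv ((1 - fps_const (c x) * fps_X) * Q) = - ((R + P) * ((1 - fps_const (c x) * fps_X) * Q))" .
  have e1: "(\<Prod>k\<in>insert x S. (1 - fps_const (c k) * fps_X)) = (1 - fps_const (c x) * fps_X) * Q"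
    unfolding Q_def by (rule prod.insert[OF insert.hyps])
  have e2: "(\<Sum>k\<in>insert x S. Abs_fps (\<lambda>m. c k ^ (m+1))) = R + P"
    unfolding R_def P_def by (rule sum.insert[OF insert.hyps])
  show ?case unfolding e1 e2 by (rule fin)
qed

lemma powersum_match:
  fixes Gf Af Qf Pf :: "complex fps"
  assumes dG: "fps_deriv Gf = - (Af * Gf)" and G0: "Gf $ 0 = 1"
    and QG: "\<And>j. j \<le> n \<Longrightarrow> Qf $ j = Gf $ j" and dQ: "fps_deriv Qf = - (Pf * Qf)"
  shows "i < n \<Longrightarrow> Pf $ i = Af $ i"
proof (induction i rule: less_induct)
  case (less i)
  have "(Pf * Qf) $ i = (Af * Gf) $ i"
  proof -
    have "fps_deriv Qf $ i = fps_deriv Gf $ i" using QG[of "i+1"] less.prems by simp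
    thus ?thesis using dQ dG by (metis fps_neg_nth neg_equal_iff_equal)
  qed
  hence "(\<Sum>j=0..i. Pf $ j * Qf $ (i - j)) = (\<Sum>j=0..i. Af $ j * Gf $ (i - j))"
    by (simp add: fps_mult_nth)
  moreover have "(\<Sum>j=0..i. Pf $ j * Qf $ (i - j)) = (\<Sum>j<i. Af $ j * Gf $ (i - j)) + Pf $ i"
  proof -
    have "(\<Sum>j=0..i. Pf $ j * Qf $ (i - j)) = (\<Sum>j<i. Pf $ j * Qf $ (i - j)) + Pf $ i * Qf $ 0"
      by (simp add: atLeast0AtMost lessThan_Suc_atMost[symmetric])
    also have "(\<Sum>j<i. Pf $ j * Qf $ (i - j)) = (\<Sum>j<i. Af $ j * Gf $ (i - j))"
      using less by (intro sum.cong refl) (auto simp: QG)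
    finally show ?thesis using QG[of 0] G0 by simp
  qed
  moreover have "(\<Sum>j=0..i. Af $ j * Gf $ (i - j)) = (\<Sum>j<i. Af $ j * Gf $ (i - j)) + Af $ i"
    using G0 by (simp add: atLeast0AtMost lessThan_Suc_atMost[symmetric])
  ultimately show ?case by simp
qed

lemma exp_circle_inj:
  assumes "0 < a" "a < 2*pi" "0 < b" "b < 2*pi"
    and "exp (\<i> * complex_of_real a) = exp (\<i> * complex_of_real b)"
  shows "a = b"
proof -
  have pi2: "0 < 2 * pi" by simp
  obtain m :: int where m: "\<i> * complex_of_real a = \<i> * complex_of_real b + of_int (2 * m) * pi * \<i>"
    using assms(5) unfolding exp_eq by blast
  have "(of_int (2 * m) * pi * \<i> :: complex) = \<i> * complex_of_real (2 * real_of_int m * pi)" by simp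
  with m have "\<i> * complex_of_real a = \<i> * complex_of_real (b + 2 * real_of_int m * pi)"
    by (simp add: distrib_left)
  hence "a = b + 2 * real_of_int m * pi" by (metis complex_i_not_zero mult_cancel_left of_real_eq_iff)
  note am = this
  have h1: "real_of_int m * (2*pi) < 1 * (2*pi)" using am assms(1-4) by linarith
  have h2: "(-1) * (2*pi) < real_of_int m * (2*pi)" using am assms(1-4) by linarith
  have "real_of_int m < 1" using h1 by (simp only: mult_less_cancel_right_pos[OF pi2])
  moreover have "-1 < real_of_int m" using h2 by (simp only: mult_less_cancel_right_pos[OF pi2])
  ultimately have "m = 0" by linarith
  thus ?thesis using \<open>a = _\<close> by simp
qed

lemma roots_construction:
  fixes g :: "nat \<Rightarrow> complex" and n :: nat
  assumes g0: "g 0 = 1" and nz: "\<And>w. norm w \<le> 1 \<Longrightarrow> (\<Sum>k\<le>n. g k * w^k) \<noteq> 0"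
  obtains lam :: "nat \<Rightarrow> complex" where "inj_on lam {1..2*n+1}"
    "\<And>k. k \<in> {1..2*n+1} \<Longrightarrow> norm (lam k) = 1"
    "\<And>j. j \<le> n \<Longrightarrow> (\<Prod>k\<in>{1..2*n+1}. (1 - fps_const (lam k) * fps_X)) $ j = g j"
proof -
  define N where "N = 2*n+1"
  define A where "A w = (\<Sum>k\<le>n. g k * w^k)" for w
  have contA: "continuous_on (cball 0 1) A" unfolding A_def by (intro continuous_intros)
  obtain L where contL: "continuous_on (cball 0 1) L" and AL: "\<And>z. z \<in> cball 0 1 \<Longrightarrow> A z = exp (L z)"
    using continuous_logarithm_on_cball[OF contA] nz unfolding A_def by auto
  define e where "e t = exp (\<i> * complex_of_real t)" for t
  have ne: "norm (e t) = 1" for t unfolding e_def by (simp add: norm_exp_eq_Re)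
  have conte: "continuous_on UNIV e" unfolding e_def by (intro continuous_intros)
  define ph where "ph t = Im (L (e t))" for t
  have contph: "continuous_on UNIV ph" unfolding ph_def
    by (intro continuous_intros continuous_on_compose2[OF contL conte]) (auto simp: ne)
  define psi where "psi t = real N * t / 2 + ph 0 - ph t" for t
  have contpsi: "continuous_on {0..2*pi} psi" unfolding psi_def
    by (intro continuous_intros continuous_on_subset[OF contph]) auto
  have e2pi: "e (2*pi) = e 0" unfolding e_def by (simp add: mult.commute)
  have psi0: "psi 0 = 0" unfolding psi_def by simp
  have psi2: "psi (2*pi) = real N * pi" unfolding psi_def ph_def e2pi by simp
  define y where "y k = real k * pi - pi / 2" for k :: nat
  have ybd: "0 < y k \<and> y k < real N * pi" if k: "k \<in> {1..N}" for k
  proof -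
    have "1 * pi \<le> real k * pi" by (rule mult_right_mono) (use k in auto)
    moreover have "real k * pi \<le> real N * pi" by (rule mult_right_mono) (use k in auto)
    ultimately show ?thesis unfolding y_def using pi_gt_zero by linarith
  qed
  have "\<forall>k. \<exists>t. k \<in> {1..N} \<longrightarrow> 0 \<le> t \<and> t \<le> 2*pi \<and> psi t = y k"
  proof
    fix k show "\<exists>t. k \<in> {1..N} \<longrightarrow> 0 \<le> t \<and> t \<le> 2*pi \<and> psi t = y k"
    proof (cases "k \<in> {1..N}")
      case True
      have "psi 0 \<le> y k" using ybd[OF True] psi0 by simp
      moreover have "y k \<le> psi (2*pi)" using ybd[OF True] psi2 by simp
      moreover have "(0::real) \<le> 2*pi" by simp
      ultimately obtain t where "0 \<le> t \<and> t \<le> 2*pi \<and> psi t = y k"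
        using IVT'[of psi 0 "y k" "2*pi", OF _ _ _ contpsi] by blast
      thus ?thesis by blast
    qed auto
  qed
  then obtain th where th: "\<And>k. k \<in> {1..N} \<Longrightarrow> 0 \<le> th k \<and> th k \<le> 2*pi \<and> psi (th k) = y k"
    by metis
  have th_in: "0 < th k \<and> th k < 2*pi" if k: "k \<in> {1..N}" for k
  proof -
    have "y k > 0" "y k < real N * pi" using ybd[OF k] by auto
    hence "th k \<noteq> 0" "th k \<noteq> 2*pi" using th[OF k] psi0 psi2 by auto
    thus ?thesis using th[OF k] by linarith
  qed
  define w where "w k = e (th k)" for k
  have nw: "norm (w k) = 1" for k unfolding w_def by (rule ne)
  have injw: "inj_on w {1..N}"
  proof (rule inj_onI)
    fix a b assume a: "a \<in> {1..N}" and b: "b \<in> {1..N}" and eq: "w a = w b"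
    have "th a = th b" using exp_circle_inj th_in[OF a] th_in[OF b] eq unfolding w_def e_def by blast
    hence "y a = y b" using th[OF a] th[OF b] by simp
    thus "a = b" unfolding y_def by simp
  qed
  define lam where "lam k = cnj (w k)" for k
  have injl: "inj_on lam {1..N}" using injw unfolding lam_def inj_on_def by (metis complex_cnj_cnj)
  have nl: "norm (lam k) = 1" for k unfolding lam_def by (simp add: nw)
  have lw: "lam k * w k = 1" for k
    unfolding lam_def using complex_norm_square[of "w k"] nw by (simp add: mult.commute)
  define u where "u = exp (\<i> * complex_of_real (2 * ph 0))"
  define Qp where "Qp = (\<Sum>k\<le>n. monom (g k) k) + (\<Sum>k\<le>n. monom (u * cnj (g k)) (N - k))"
  have polyQ: "poly Qp x = A x + u * (\<Sum>k\<le>n. cnj (g k) * x^(N-k))" for x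
    unfolding Qp_def A_def by (simp add: poly_sum poly_monom sum_distrib_left mult_ac)
  have circ: "(\<Sum>k\<le>n. cnj (g k) * x^(N-k)) = x^N * cnj (A x)" if x: "norm x = 1" for x
  proof -
    have xc: "x * cnj x = 1" using complex_norm_square[of x] x by simp
    have "x^(N-k) = x^N * cnj x ^ k" if "k \<le> n" for k
    proof -
      have "x^N = x^(N-k) * x^k" using that unfolding N_def by (simp add: power_add[symmetric])
      hence "x^N * cnj x ^ k = x^(N-k) * (x * cnj x)^k" by (simp add: power_mult_distrib mult_ac)
      thus ?thesis using xc by simp
    qed
    thus ?thesis unfolding A_def by (simp add: cnj_sum sum_distrib_left mult_ac)
  qed
  have roots: "poly Qp (w k) = 0" if k: "k \<in> {1..N}" for k
  proof -
    define x where "x = w k"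
    define t where "t = th k"
    have xin: "x \<in> cball 0 1" using nw unfolding x_def by simp
    define Lx where "Lx = L x"
    have Ax: "A x = exp Lx" using AL[OF xin] unfolding Lx_def .
    have phx: "Im Lx = ph t" unfolding Lx_def ph_def x_def w_def t_def ..
    have psit: "psi t = y k" using th[OF k] unfolding t_def by simp
    have xN: "x^N = exp (\<i> * complex_of_real (real N * t))"
      unfolding x_def w_def e_def t_def by (simp add: exp_of_nat_mult[symmetric] mult_ac)
    have k1: "k \<ge> 1" using k by simp
    have arg: "\<i> * complex_of_real (2 * ph 0) + \<i> * complex_of_real (real N * t) + cnj Lx
               = Lx + of_nat (2*k - 1) * (complex_of_real pi * \<i>)"
    proof (rule complex_eqI)
      show "Re (\<i> * complex_of_real (2 * ph 0) + \<i> * complex_of_real (real N * t) + cnj Lx) =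
            Re (Lx + of_nat (2*k - 1) * (complex_of_real pi * \<i>))" by simp
      have "real (2*k - 1) = 2 * real k - 1" using k1 by (simp add: of_nat_diff)
      then show "Im (\<i> * complex_of_real (2 * ph 0) + \<i> * complex_of_real (real N * t) + cnj Lx) =
            Im (Lx + of_nat (2*k - 1) * (complex_of_real pi * \<i>))"
        using psit phx unfolding psi_def y_def by (simp add: algebra_simps)
    qed
    have "u * x^N * cnj (A x) = exp (\<i> * complex_of_real (2 * ph 0) + \<i> * complex_of_real (real N * t) + cnj Lx)"
      unfolding u_def xN Ax by (simp add: exp_cnj exp_add)
    also have "\<dots> = exp Lx * exp (complex_of_real pi * \<i>) ^ (2*k - 1)"
      unfolding arg by (simp add: exp_add exp_of_nat_mult)
    also have "\<dots> = - exp Lx" using k1 by simp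
    finally have "u * x^N * cnj (A x) = - A x" unfolding Ax .
    thus ?thesis using polyQ[of x] circ[OF nw[of k]] unfolding x_def by (simp add: mult_ac)
  qed
  have coeffQ: "coeff Qp j = (\<Sum>k\<le>n. if k = j then g k else 0) + (\<Sum>k\<le>n. if N - k = j then u * cnj (g k) else 0)" for j
    unfolding Qp_def by (simp add: coeff_sum)
  have cQ_low: "coeff Qp j = g j" if "j \<le> n" for j
  proof -
    have "(\<Sum>k\<le>n. if N - k = j then u * cnj (g k) else 0) = 0"
      by (intro sum.neutral) (use that in \<open>auto simp: N_def\<close>)
    thus ?thesis using that unfolding coeffQ by simp
  qed
  have cQ_N: "coeff Qp N = u"
  proof -
    have "(\<Sum>k\<le>n. if N - k = N then u * cnj (g k) else 0) = (\<Sum>k\<le>n. if k = 0 then u * cnj (g k) else 0)"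
      by (intro sum.cong refl) (auto simp: N_def)
    also have "\<dots> = u" using g0 by simp
    finally show ?thesis unfolding coeffQ by (simp add: N_def)
  qed
  have dQ: "degree Qp \<le> N"
  proof (rule degree_le, intro allI impI)
    fix i assume i: "N < i"
    have "(\<Sum>k\<le>n. if N - k = i then u * cnj (g k) else 0) = 0"
      by (intro sum.neutral) (use i in auto)
    thus "coeff Qp i = 0" using i unfolding coeffQ by (simp add: N_def)
  qed
  have Qeq: "Qp = smult u (\<Prod>k\<in>{1..N}. [:- w k, 1:])"
    by (rule poly_eq_from_roots[OF _ injw _ roots dQ cQ_N]) auto
  have "poly Qp 0 = 1" using cQ_low[of 0] g0 by (simp add: poly_0_coeff_0)
  hence u1: "u * (\<Prod>k\<in>{1..N}. - w k) = 1" unfolding Qeq by (simp add: poly_prod)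
  have ul: "(\<Prod>k\<in>{1..N}. - lam k) = u"
  proof -
    have "(\<Prod>k\<in>{1..N}. - lam k) * (\<Prod>k\<in>{1..N}. - w k) = (\<Prod>k\<in>{1..N}. lam k * w k)"
      unfolding prod.distrib[symmetric] by simp
    also have "\<dots> = 1" by (simp add: lw)
    finally have "(\<Prod>k\<in>{1..N}. - lam k) * (\<Prod>k\<in>{1..N}. - w k) = u * (\<Prod>k\<in>{1..N}. - w k)"
      using u1 by simp
    moreover have "(\<Prod>k\<in>{1..N}. - w k) \<noteq> 0" using u1 by (metis mult_zero_right zero_neq_one)
    ultimately show ?thesis by simp
  qed
  have Qeq2: "Qp = (\<Prod>k\<in>{1..N}. [:1, - lam k:])"
  proof -
    have "poly Qp x = poly (\<Prod>k\<in>{1..N}. [:1, - lam k:]) x" for x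
    proof -
      have fac: "poly [:1, - lam k:] x = (- lam k) * (x - w k)" for k
      proof -
        have "poly [:1, - lam k:] x = 1 - lam k * x" by simp
        also have "\<dots> = lam k * w k - lam k * x" by (simp add: lw)
        finally show ?thesis by (simp add: algebra_simps)
      qed
      have "poly (\<Prod>k\<in>{1..N}. [:1, - lam k:]) x = (\<Prod>k\<in>{1..N}. (- lam k) * (x - w k))"
        unfolding poly_prod by (intro prod.cong refl fac)
      also have "\<dots> = u * (\<Prod>k\<in>{1..N}. (x - w k))" unfolding prod.distrib ul ..
      also have "\<dots> = poly Qp x" unfolding Qeq by (simp add: poly_prod)
      finally show ?thesis by simp
    qed
    thus ?thesis using poly_eq_poly_eq_iff by blast
  qed
  have fpsQ: "fps_of_poly Qp = (\<Prod>k\<in>{1..N}. (1 - fps_const (lam k) * fps_X))"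
    unfolding Qeq2 fps_of_poly_prod by (intro prod.cong refl) (auto simp: fps_eq_iff coeff_pCons split: nat.split)
  show ?thesis
  proof (rule that)
    show "inj_on lam {1..2*n+1}" using injl unfolding N_def .
    show "norm (lam k) = 1" for k by (rule nl)
    show "(\<Prod>k\<in>{1..2*n+1}. (1 - fps_const (lam k) * fps_X)) $ j = g j" if "j \<le> n" for j
      using fpsQ cQ_low[OF that] unfolding N_def by (metis fps_of_poly_nth)
  qed
qed

lemma final_ineq:
  fixes s M B :: real and n :: nat
  assumes s: "0 \<le> s" "s < 1" and M: "0 < M" and B: "0 \<le> B" and n: "n \<ge> 3 * (nat \<lceil>B\<rceil> + 10)"
  shows "M * (real (2*n+1) + B) * s^n / (1 - s)
     \<le> s ^ n * (5 - s) ^ (n+1) / 4 powi (int n - 1) * (2 * M / 3) * ((3 + s) / (1 - s) ^ 4)"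
proof -
  define t where "t = 1 - s"
  have t: "0 < t" "t \<le> 1" using s unfolding t_def by auto
  define m where "m = n div 3"
  have m1: "real m \<ge> B + 10"
  proof -
    have "(3 * (nat \<lceil>B\<rceil> + 10)) div 3 \<le> n div 3" by (rule div_le_mono[OF n])
    hence "nat \<lceil>B\<rceil> + 10 \<le> n div 3" by simp
    hence "real (nat \<lceil>B\<rceil>) + 10 \<le> real (n div 3)" by linarith
    moreover have "B \<le> real (nat \<lceil>B\<rceil>)" by linarith
    ultimately show ?thesis unfolding m_def by linarith
  qed
  have m3: "3 * m \<le> n + 1" unfolding m_def by simp
  have nm: "real n \<le> 3 * real m + 2" unfolding m_def by linarith
  have n1: "n \<ge> 1" using n by simp
  have pw: "(4::real) powi (int n - 1) = 4 ^ (n - 1)"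
  proof -
    have "int n - 1 = int (n - 1)" using n1 by simp
    thus ?thesis by (simp only: power_int_of_nat)
  qed
  have E1: "(5 - s)^(n+1) / 4 powi (int n - 1) = 16 * (1 + t/4)^(n+1)"
  proof -
    have "5 - s = 4 * (1 + t/4)" unfolding t_def by (simp add: field_simps)
    hence "(5 - s)^(n+1) = (4 * (1 + t/4))^(n+1)" by (simp only:)
    also have "\<dots> = 4^(n+1) * (1 + t/4)^(n+1)" by (rule power_mult_distrib)
    also have "(4::real)^(n+1) = 16 * 4^(n-1)"
    proof -
      have "n + 1 = (n-1) + 2" using n1 by simp
      hence "(4::real)^(n+1) = 4^(n-1) * 4^2" by (simp only: power_add)
      thus ?thesis by simp
    qed
    finally show ?thesis unfolding pw by simp
  qed
  define X where "X = (1 + t/4)^(n+1)"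
  have X: "X \<ge> (real m * t / 4)^3"
  proof -
    have "(real m * t / 4)^3 \<le> (1 + real m * (t/4))^3"
      using t by (intro power_mono) auto
    also have "\<dots> \<le> ((1 + t/4)^m)^3"
      using t by (intro power_mono Bernoulli_inequality) auto
    also have "\<dots> = (1 + t/4)^(3*m)" by (simp add: power_mult[symmetric] mult.commute)
    also have "\<dots> \<le> X" unfolding X_def using t m3 by (intro power_increasing) auto
    finally show ?thesis .
  qed
  have core: "real (2*n+1) + B \<le> real m ^ 3 / 2"
  proof -
    have "real m ^ 3 = real m * (real m * real m)" by (simp add: power3_eq_cube)
    moreover have "real m * real m \<ge> 10 * 10" using m1 B by (intro mult_mono) auto
    hence "real m * 100 \<le> real m * (real m * real m)" by (intro mult_left_mono) auto
    ultimately have "real m ^ 3 \<ge> real m * 100" by simp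
    thus ?thesis using nm m1 B by simp
  qed
  have key: "(real (2*n+1) + B) * t^3 \<le> 16 * X * (2/3) * (3 + s)"
  proof -
    have "(real (2*n+1) + B) * t^3 \<le> (real m ^ 3 / 2) * t^3"
      using core t by (intro mult_right_mono) auto
    also have "\<dots> = 32 * (real m * t / 4)^3" by (simp add: power_mult_distrib power_divide)
    also have "\<dots> \<le> 32 * X" using X by simp
    also have "\<dots> \<le> 16 * X * (2/3) * (3 + s)"
    proof -
      have "X \<ge> 0" unfolding X_def using t by simp
      moreover have "32 \<le> 16 * (2/3) * (3 + s)" using s by simp
      ultimately have "32 * X \<le> (16 * (2/3) * (3 + s)) * X" by (intro mult_right_mono) auto
      thus ?thesis by (simp add: mult_ac)
    qed
    finally show ?thesis .
  qed
  have "M * (real (2*n+1) + B) / t \<le> 16 * X * (2 * M / 3) * ((3 + s) / t ^ 4)"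
  proof -
    have "M * (real (2*n+1) + B) / t = M * ((real (2*n+1) + B) * t^3) / t^4"
      using t by (simp add: field_simps power_eq_if)
    also have "\<dots> \<le> M * (16 * X * (2/3) * (3 + s)) / t^4"
      using key t M by (intro divide_right_mono mult_left_mono) auto
    also have "\<dots> = 16 * X * (2 * M / 3) * ((3 + s) / t ^ 4)" by simp
    finally show ?thesis .
  qed
  hence "s^n * (M * (real (2*n+1) + B) / t) \<le> s^n * (16 * X * (2 * M / 3) * ((3 + s) / t ^ 4))"
    using s by (intro mult_left_mono) auto
  moreover have "M * (real (2*n+1) + B) * s^n / (1 - s) = s^n * (M * (real (2*n+1) + B) / t)"
    unfolding t_def by (simp add: mult_ac)
  moreover have "s ^ n * (5 - s) ^ (n+1) / 4 powi (int n - 1) * (2 * M / 3) * ((3 + s) / (1 - s) ^ 4)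
      = s^n * (((5 - s) ^ (n+1) / 4 powi (int n - 1)) * (2 * M / 3) * ((3 + s) / (1 - s) ^ 4))"
  proof -
    have gen: "a * b / P * c * d = a * (b / P * c * d)" for a b P c d :: real
      by (metis mult.assoc times_divide_eq_right)
    show ?thesis by (rule gen)
  qed
  moreover have "\<dots> = s^n * (16 * X * (2 * M / 3) * ((3 + s) / t ^ 4))"
    unfolding E1 X_def t_def ..
  ultimately show ?thesis by simp
qed

lemma tail_nonzero:
  fixes Gf :: "complex fps" and G :: "complex \<Rightarrow> complex"
  assumes sN: "summable (\<lambda>k. norm (Gf $ k))"
    and sG: "\<And>w. norm w < 1 \<Longrightarrow> (\<lambda>k. Gf $ k * w^k) sums G w"
    and Glo: "\<And>w. norm w < 1 \<Longrightarrow> exp (-B) \<le> norm (G w)"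
  obtains n2 where "\<And>n w. n \<ge> n2 \<Longrightarrow> norm w \<le> 1 \<Longrightarrow> (\<Sum>k\<le>n. Gf $ k * w^k) \<noteq> 0"
proof -
  define S where "S = (\<Sum>k. norm (Gf $ k))"
  have lim: "(\<lambda>m. S - (\<Sum>k<m. norm (Gf $ k))) \<longlonglongrightarrow> 0"
    using tendsto_diff[OF tendsto_const[of S] summable_LIMSEQ[OF sN]] unfolding S_def by simp
  have "exp (-B) / 2 > 0" by simp
  from order_tendstoD(2)[OF lim this] obtain n2 where
    n2: "\<And>m. m \<ge> n2 \<Longrightarrow> S - (\<Sum>k<m. norm (Gf $ k)) < exp (-B) / 2"
    unfolding eventually_sequentially by blast
  show ?thesis
  proof (rule that)
    fix n :: nat and w :: complex assume n: "n \<ge> n2" and w: "norm w \<le> 1"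
    define A where "A w = (\<Sum>k\<le>n. Gf $ k * w^k)" for w
    have tail: "S - (\<Sum>k<Suc n. norm (Gf $ k)) = (\<Sum>i. norm (Gf $ (i + Suc n)))"
      using suminf_split_initial_segment[OF sN, of "Suc n"] unfolding S_def by simp
    have stail: "summable (\<lambda>i. norm (Gf $ (i + Suc n)))" by (rule summable_iff_shift[THEN iffD2, OF sN])
    have ball: "exp (-B) / 2 \<le> norm (A w)" if w: "norm w < 1" for w
    proof -
      have s2: "(\<lambda>i. Gf $ (i + Suc n) * w^(i + Suc n)) sums (G w - A w)"
        using sums_split_initial_segment[OF sG[OF w], of "Suc n"] unfolding A_def
        by (simp add: lessThan_Suc_atMost)
      have nb: "norm (Gf $ (i + Suc n) * w^(i + Suc n)) \<le> norm (Gf $ (i + Suc n))" for i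
      proof -
        have "norm w ^ (i + Suc n) \<le> 1" by (rule power_le_one) (use w in auto)
        thus ?thesis unfolding norm_mult norm_power by (rule mult_left_le[OF _ norm_ge_zero])
      qed
      have "norm (G w - A w) \<le> (\<Sum>i. norm (Gf $ (i + Suc n)))"
      proof -
        have sn: "summable (\<lambda>i. norm (Gf $ (i + Suc n) * w^(i + Suc n)))"
          by (rule summable_comparison_test'[OF stail]) (use nb in simp)
        have "norm (G w - A w) \<le> (\<Sum>i. norm (Gf $ (i + Suc n) * w^(i + Suc n)))"
          using summable_norm[OF sn] s2 by (simp add: sums_iff)
        also have "\<dots> \<le> (\<Sum>i. norm (Gf $ (i + Suc n)))"
          by (rule suminf_le[OF nb sn stail])
        finally show ?thesis .
      qed
      also have "\<dots> < exp (-B) / 2" using n2[of "Suc n"] n tail by simp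
      finally have "norm (G w - A w) < exp (-B) / 2" .
      moreover have "exp (-B) \<le> norm (G w)" by (rule Glo[OF w])
      ultimately show ?thesis using norm_triangle_ineq2[of "G w" "A w"] by linarith
    qed
    have contA: "continuous_on UNIV A" unfolding A_def by (intro continuous_intros)
    have cl: "closed {w. exp (-B) / 2 \<le> norm (A w)}"
      by (rule closed_Collect_le) (intro continuous_intros contA)+
    have "closure (ball 0 1) \<subseteq> {w. exp (-B) / 2 \<le> norm (A w)}"
      by (rule closure_minimal[OF _ cl]) (use ball in auto)
    hence "exp (-B) / 2 \<le> norm (A w)" using w by auto
    moreover have "exp (-B) / 2 > 0" by simp
    ultimately show "(\<Sum>k\<le>n. Gf $ k * w^k) \<noteq> 0" unfolding A_def by auto
  qed
qed

lemma error_bound: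
  fixes h f a :: "nat \<Rightarrow> complex" and lam :: "nat \<Rightarrow> complex" and M B :: real and z :: complex
  assumes hM: "\<And>j. norm (h j) \<le> M" and hnz: "\<And>j. h j \<noteq> 0"
    and hs: "\<And>z. norm z < 1 \<Longrightarrow> summable (\<lambda>j. h j * z ^ j)"
    and a: "\<And>j. a j = f j / h j" and aB: "\<And>j. norm (a j) \<le> B"
    and nl: "\<And>k. k \<in> {1..N} \<Longrightarrow> norm (lam k) = 1"
    and ps: "\<And>i. i < n \<Longrightarrow> (\<Sum>k\<in>{1..N}. lam k ^ (i+1)) = a i"
    and z: "norm z < 1"
  shows "norm (HN h N lam z - pser f z) \<le> M * (real N + B) * norm z ^ n / (1 - norm z)"
proof -
  define P where "P j = (\<Sum>k\<in>{1..N}. lam k ^ (j+1))" for j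
  have M0: "0 \<le> M" using hM[of 0] norm_ge_zero order_trans by blast
  have B0: "0 \<le> B" using aB[of 0] norm_ge_zero order_trans by blast
  have PN: "norm (P j) \<le> real N" for j
  proof -
    have "norm (P j) \<le> (\<Sum>k\<in>{1..N}. norm (lam k ^ (j+1)))" unfolding P_def by (rule norm_sum)
    also have "\<dots> = (\<Sum>k\<in>{1..N}. 1)" by (intro sum.cong refl) (subst norm_power, simp add: nl)
    finally show ?thesis by simp
  qed
  have s1: "(\<lambda>j. h j * P j * z^j) sums HN h N lam z"
  proof -
    have "(\<lambda>j. lam k * (h j * (lam k * z)^j)) sums (lam k * pser h (lam k * z))" if k: "k \<in> {1..N}" for k
    proof -
      have "norm (lam k * z) < 1" using z nl[OF k] by (simp add: norm_mult)
      hence "(\<lambda>j. h j * (lam k * z)^j) sums pser h (lam k * z)"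
        unfolding pser_def using hs summable_sums by blast
      thus ?thesis by (rule sums_mult)
    qed
    hence "(\<lambda>j. \<Sum>k\<in>{1..N}. lam k * (h j * (lam k * z)^j)) sums (\<Sum>k\<in>{1..N}. lam k * pser h (lam k * z))"
      by (rule sums_sum)
    moreover have "(\<Sum>k\<in>{1..N}. lam k * (h j * (lam k * z)^j)) = h j * P j * z^j" for j
      unfolding P_def by (simp add: sum_distrib_left sum_distrib_right power_mult_distrib mult_ac)
    ultimately show ?thesis unfolding HN_def by simp
  qed
  have fh: "f j = h j * a j" for j using a[of j] hnz[of j] by simp
  have s2: "(\<lambda>j. h j * a j * z^j) sums pser f z"
  proof -
    have "summable (\<lambda>j. h j * a j * z^j)"
    proof (rule summable_comparison_test'[where g = "\<lambda>j. M * B * norm z ^ j"])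
      show "summable (\<lambda>j. M * B * norm z ^ j)" using z by (intro summable_mult summable_geometric) simp
      show "norm (h j * a j * z^j) \<le> M * B * norm z ^ j" for j
        unfolding norm_mult norm_power using hM[of j] aB[of j] M0 B0
        by (intro mult_mono) auto
    qed
    thus ?thesis unfolding pser_def fh by (simp add: summable_sums)
  qed
  define e where "e j = h j * (P j - a j) * z^j" for j
  have s3: "e sums (HN h N lam z - pser f z)"
    unfolding e_def using sums_diff[OF s1 s2] by (simp add: algebra_simps)
  have e0: "e j = 0" if "j < n" for j using ps[OF that] unfolding e_def P_def by simp
  have s4: "(\<lambda>i. e (i + n)) sums (HN h N lam z - pser f z)"
    using sums_split_initial_segment[OF s3, of n] e0 by simp
  define c where "c = M * (real N + B)"
  have eb: "norm (e (i + n)) \<le> c * norm z ^ n * norm z ^ i" for i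
  proof -
    have "norm (P (i+n) - a (i+n)) \<le> real N + B"
      using norm_triangle_ineq4[of "P (i+n)" "a (i+n)"] PN aB by (smt (verit))
    hence "norm (e (i+n)) \<le> M * (real N + B) * norm z ^ (i+n)"
      unfolding e_def norm_mult norm_power using hM M0 B0 by (intro mult_mono) auto
    thus ?thesis unfolding c_def by (simp add: power_add mult_ac)
  qed
  have sg: "(\<lambda>i. c * norm z ^ n * norm z ^ i) sums (c * norm z ^ n * (1 / (1 - norm z)))"
    using z by (intro sums_mult geometric_sums) simp
  have sne: "summable (\<lambda>i. norm (e (i + n)))"
    by (rule summable_comparison_test'[OF sums_summable[OF sg]]) (use eb in simp)
  have "norm (HN h N lam z - pser f z) \<le> (\<Sum>i. norm (e (i + n)))"
    using summable_norm[OF sne] s4 by (simp add: sums_iff)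
  also have "\<dots> \<le> (\<Sum>i. c * norm z ^ n * norm z ^ i)"
    by (rule suminf_le[OF eb sne sums_summable[OF sg]])
  also have "\<dots> = c * norm z ^ n * (1 / (1 - norm z))" using sg by (simp add: sums_iff)
  finally show ?thesis unfolding c_def by simp
qed

theorem theorem2p2:
  fixes h f :: "nat \<Rightarrow> complex" and M :: real
  assumes hcoef: "\<And>j. 0 < norm (h j) \<and> norm (h j) \<le> M"
    and hanalytic: "\<And>z. norm z < 1 \<Longrightarrow> summable (\<lambda>j. h j * z ^ j)"
    and Fbdd: "\<exists>F. F holomorphic_on ball 0 1 \<and> bounded (F ` ball 0 1) \<and>
                 (\<forall>z\<in>ball 0 1. ((\<lambda>j. (f j / h j) * z ^ j) sums F z))"
  shows "\<exists>n1::nat. \<forall>n\<ge>n1. \<exists>lam :: nat \<Rightarrow> complex.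
           inj_on lam {1..2*n+1} \<and> (\<forall>k\<in>{1..2*n+1}. norm (lam k) = 1) \<and>
           (\<forall>z. norm z < 1 \<longrightarrow>
              norm (HN h (2*n+1) lam z - pser f z)
                \<le> norm z ^ n * (5 - norm z) ^ (n+1) / 4 powi (int n - 1)
                   * (2 * M / 3) * ((3 + norm z) / (1 - norm z) ^ 4))"
proof -
  obtain F where holF: "F holomorphic_on ball 0 1" and bF: "bounded (F ` ball 0 1)"
    and sF: "\<forall>z\<in>ball 0 1. ((\<lambda>j. (f j / h j) * z ^ j) sums F z)"
    using Fbdd by blast
  obtain B0 where B0: "\<forall>x\<in>F ` ball 0 1. norm x \<le> B0" using bF bounded_iff by blast
  define B where "B = max B0 0"
  have B: "0 \<le> B" unfolding B_def by simp
  have bdF: "norm (F w) \<le> B" if "norm w < 1" for w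
  proof -
    have "w \<in> ball 0 1" using that by simp
    hence "norm (F w) \<le> B0" using B0 by blast
    thus ?thesis unfolding B_def by linarith
  qed
  define a where "a j = f j / h j" for j
  have M: "0 < M" using hcoef[of 0] by linarith
  have hnz: "h j \<noteq> 0" for j using hcoef[of j] by auto
  have hM: "norm (h j) \<le> M" for j using hcoef[of j] by auto
  have sa: "(\<lambda>j. a j * w ^ j) sums F w" if "norm w < 1" for w
    using sF that unfolding a_def by (auto simp: dist_norm)
  have fpsA: "fps_expansion F 0 = Abs_fps a"
  proof (rule fps_expansion_eqI)
    have "conv_radius a \<ge> 1"
    proof (rule conv_radius_geI_ex')
      fix r :: real assume r: "0 < r" "ereal r < 1"
      hence "norm (complex_of_real r) < 1" by simp
      thus "summable (\<lambda>n. a n * of_real r ^ n)" using sa sums_summable by blast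
    qed
    hence rad: "fps_conv_radius (Abs_fps a) > 0"
      unfolding fps_conv_radius_def by (simp add: less_le_trans[OF _ \<open>conv_radius a \<ge> 1\<close>])
    have "eventually (\<lambda>z. z \<in> ball 0 1) (nhds (0::complex))" by (rule eventually_nhds_in_open) auto
    hence "eventually (\<lambda>z. eval_fps (Abs_fps a) z = F z) (nhds 0)"
      by eventually_elim (use sa in \<open>auto simp: eval_fps_def sums_iff\<close>)
    thus "F has_fps_expansion Abs_fps a" using rad unfolding has_fps_expansion_def by simp
  qed
  have aB: "norm (a j) \<le> B" for j
  proof -
    have p1: "(\<Sum>i<Suc j. (norm (a i))^2) \<le> B^2" by (rule parseval_bound[OF sa bdF])
    have p2: "(norm (a j))^2 \<le> (\<Sum>i<Suc j. (norm (a i))^2)"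
      by (rule member_le_sum) auto
    have "(norm (a j))^2 \<le> B^2" by (rule order_trans[OF p2 p1])
    thus ?thesis by (rule power2_le_imp_le[OF _ B])
  qed
  obtain Gf :: "complex fps" and G :: "complex \<Rightarrow> complex" where G0: "Gf $ 0 = 1" and deq0: "fps_deriv Gf = - (fps_expansion F 0 * Gf)"
    and sN: "summable (\<lambda>k. norm (Gf $ k))"
    and sG: "\<And>w. norm w < 1 \<Longrightarrow> (\<lambda>k. Gf $ k * w^k) sums G w"
    and Glo: "\<And>w. norm w < 1 \<Longrightarrow> exp (-B) \<le> norm (G w)"
    using analytic_setup[OF holF bdF] by blast
  have deq: "fps_deriv Gf = - (Abs_fps a * Gf)" using deq0 fpsA by simp
  obtain n2 where n2: "\<And>n w. n \<ge> n2 \<Longrightarrow> norm w \<le> 1 \<Longrightarrow> (\<Sum>k\<le>n. Gf $ k * w^k) \<noteq> 0"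
    using tail_nonzero[OF sN sG Glo] by blast
  show ?thesis
  proof (intro exI[of _ "max n2 (3 * (nat \<lceil>B\<rceil> + 10))"] allI impI)
    fix n :: nat assume n: "max n2 (3 * (nat \<lceil>B\<rceil> + 10)) \<le> n"
    have nz: "\<And>w. norm w \<le> 1 \<Longrightarrow> (\<Sum>k\<le>n. Gf $ k * w^k) \<noteq> 0" using n2 n by auto
    obtain lam where injl: "inj_on lam {1..2*n+1}" and nl: "\<And>k. k \<in> {1..2*n+1} \<Longrightarrow> norm (lam k) = 1"
      and QG: "\<And>j. j \<le> n \<Longrightarrow> (\<Prod>k\<in>{1..2*n+1}. (1 - fps_const (lam k) * fps_X)) $ j = Gf $ j"
      using roots_construction[of "\<lambda>k. Gf $ k" n, OF G0 nz] by blast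
    have newt: "fps_deriv (\<Prod>k\<in>{1..2*n+1}. (1 - fps_const (lam k) * fps_X))
       = - ((\<Sum>k\<in>{1..2*n+1}. Abs_fps (\<lambda>m. lam k ^ (m+1))) * (\<Prod>k\<in>{1..2*n+1}. (1 - fps_const (lam k) * fps_X)))"
      by (rule newton_fps) simp
    have ps: "(\<Sum>k\<in>{1..2*n+1}. lam k ^ (i+1)) = a i" if i: "i < n" for i
    proof -
      have "(\<Sum>k\<in>{1..2*n+1}. Abs_fps (\<lambda>m. lam k ^ (m+1))) $ i = Abs_fps a $ i"
        by (rule powersum_match[OF deq G0 QG newt i])
      thus ?thesis by (simp add: fps_sum_nth)
    qed
    have bnd: "norm (HN h (2*n+1) lam z - pser f z)
                \<le> norm z ^ n * (5 - norm z) ^ (n+1) / 4 powi (int n - 1)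
                   * (2 * M / 3) * ((3 + norm z) / (1 - norm z) ^ 4)" if z: "norm z < 1" for z
    proof -
      have "norm (HN h (2*n+1) lam z - pser f z) \<le> M * (real (2*n+1) + B) * norm z ^ n / (1 - norm z)"
        by (rule error_bound[OF hM hnz hanalytic a_def aB nl ps z])
      also have "\<dots> \<le> norm z ^ n * (5 - norm z) ^ (n+1) / 4 powi (int n - 1)
                   * (2 * M / 3) * ((3 + norm z) / (1 - norm z) ^ 4)"
        by (rule final_ineq[OF norm_ge_zero z M B]) (use n in simp)
      finally show ?thesis .
    qed
    show "\<exists>lam :: nat \<Rightarrow> complex.
           inj_on lam {1..2*n+1} \<and> (\<forall>k\<in>{1..2*n+1}. norm (lam k) = 1) \<and>
           (\<forall>z. norm z < 1 \<longrightarrow>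
              norm (HN h (2*n+1) lam z - pser f z)
                \<le> norm z ^ n * (5 - norm z) ^ (n+1) / 4 powi (int n - 1)
                   * (2 * M / 3) * ((3 + norm z) / (1 - norm z) ^ 4))"
      using injl nl bnd by blast
  qed
qed

end
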